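(* Let $N\ge 1$, let $z_1,\dots,z_N\in\mathbb{C}^*$ and $n_1,\dots,n_N\in\mathbb{C}$. Then the assignment \[ X\mapsto \sum_{i=1}^N z_1^{-1}\cdots z_{i-1}^{-1}\,z_{i+1}\cdots z_N\,a_i,\qquad Y\mapsto \sum_{i=1}^N z_1^{-1}\cdots z_{i-1}^{-1}\,(z_i^2-z_i^{-2})\,z_{i+1}\cdots z_N\,b_i, \] \[ t\mapsto z_1\cdots z_N,\qquad G\mapsto \sum_{i=1}^N (n_i+a_ib_i) \] defines a unique (super)algebra homomorphism $\Phi_{\mathbf n,\mathbf z}:U_q(\mathfrak{gl}(1|1))\to \mathrm{Cl}_N$. Moreover, the $U_q(\mathfrak{gl}(1|1))$-module obtained by pulling back the $\mathrm{Cl}_N$-module $U_N$ along $\Phi_{\mathbf n,\mathbf z}$ is isomorphic to the tensor product representation $V_{z_1,n_1}\otimes\cdots\otimes V_{z_N,n_N}$.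
   Context: All algebras are over $\mathbb{C}$ and are superalgebras (i.e. $\mathbb{Z}/2$-graded). $U_q(\mathfrak{gl}(1|1))$ denotes the superalgebra generated by odd elements $X,Y$ and even elements $G$, $t$, $t^{-1}$ subject to the relations $tt^{-1}=t^{-1}t=1$, $XY+YX=t^2-t^{-2}$, $X^2=Y^2=0$, $GX-XG=X$, $GY-YG=-Y$, and $t$ commutes with $X,Y,G$. It is a Hopf superalgebra with coproduct $\Delta X=X\otimes t+t^{-1}\otimes X$, $\Delta Y=Y\otimes t+t^{-1}\otimes Y$, $\Delta t=t\otimes t$, $\Delta G=G\otimes 1+1\otimes G$; tensor products of modules are formed via $\Delta$ using the Koszul sign rule $(a\otimes b)(x\otimes y)=(-1)^{|b||x|}ax\otimes by$. For $z\in\mathbb{C}^*$, $n\in\mathbb{C}$, $V_{z,n}$ is the $2$-dimensional module with basis $v$ (even), $u$ (odd) such that $Xv=u$, $Yv=0$, $Gv=nv$, $tv=zv$, $Xu=0$, $Gu=(n+1)u$, $Yu=(z^2-z^{-2})v$, $tu=zu$. $\mathrm{Cl}_N$ is the Clifford superalgebra generated by odd elements $a_1,\dots,a_N,b_1,\dots,b_N$ with relations $a_ia_j+a_ja_i=0$, $b_ib_j+b_jb_i=0$, $a_ib_j+b_ja_i=\delta_{ij}$. $U_N$ is its irreducible $2^N$-dimensional module generated by a vector $v$ with $b_iv=0$ for all $i$; equivalently $U_N=\bigwedge^\bullet U$ with $U=\mathrm{span}(a_1,\dots,a_N)$, $a_i$ acting by left wedge multiplication and $b_i$ by the corresponding contraction,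 with parity given by degree mod 2. *)

theory Defs
  imports Complex_Main
begin

text \<open>A unital ring 'a together with a map e from C into its centre which is a
unital ring homomorphism: this is exactly a (unital, associative) C-algebra.\<close>
definition cplx_alg :: "(complex \<Rightarrow> 'a::ring_1) \<Rightarrow> bool" where
  "cplx_alg e \<longleftrightarrow> e 1 = 1 \<and> (\<forall>x y. e (x + y) = e x + e y) \<and>
     (\<forall>x y. e (x * y) = e x * e y) \<and> (\<forall>x c. e x * c = c * e x)"

definition clifford_rel :: "nat \<Rightarrow> (nat \<Rightarrow> 'a::ring_1) \<Rightarrow> (nat \<Rightarrow> 'a) \<Rightarrow> bool" where
  "clifford_rel N a b \<longleftrightarrow>
     (\<forall>i\<in>{1..N}. \<forall>j\<in>{1..N}.
        a i * a j + a j * a i = 0 \<and> b i * b j + b j * b i = 0 \<and>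
        a i * b j + b j * a i = (if i = j then 1 else 0))"

definition uq_rel :: "'a::ring_1 \<Rightarrow> 'a \<Rightarrow> 'a \<Rightarrow> 'a \<Rightarrow> 'a \<Rightarrow> bool" where
  "uq_rel X Y G T Ti \<longleftrightarrow>
     T * Ti = 1 \<and> Ti * T = 1 \<and> X * Y + Y * X = T^2 - Ti^2 \<and>
     X * X = 0 \<and> Y * Y = 0 \<and> G * X - X * G = X \<and> G * Y - Y * G = - Y \<and>
     T * X = X * T \<and> T * Y = Y * T \<and> T * G = G * T"

definition coefX :: "nat \<Rightarrow> (nat \<Rightarrow> complex) \<Rightarrow> nat \<Rightarrow> complex" where
  "coefX N z i = (\<Prod>j\<in>{1..<i}. inverse (z j)) * (\<Prod>j\<in>{i<..N}. z j)"

definition coefY :: "nat \<Rightarrow> (nat \<Rightarrow> complex) \<Rightarrow> nat \<Rightarrow> complex" where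
  "coefY N z i = (\<Prod>j\<in>{1..<i}. inverse (z j)) * (z i ^ 2 - inverse (z i) ^ 2) *
                 (\<Prod>j\<in>{i<..N}. z j)"

definition zprod :: "nat \<Rightarrow> (nat \<Rightarrow> complex) \<Rightarrow> complex" where
  "zprod N z = (\<Prod>j\<in>{1..N}. z j)"

definition PhiX :: "nat \<Rightarrow> (nat \<Rightarrow> complex) \<Rightarrow> (complex \<Rightarrow> 'a::ring_1) \<Rightarrow> (nat \<Rightarrow> 'a) \<Rightarrow> 'a" where
  "PhiX N z e a = (\<Sum>i=1..N. e (coefX N z i) * a i)"

definition PhiY :: "nat \<Rightarrow> (nat \<Rightarrow> complex) \<Rightarrow> (complex \<Rightarrow> 'a::ring_1) \<Rightarrow> (nat \<Rightarrow> 'a) \<Rightarrow> 'a" where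
  "PhiY N z e b = (\<Sum>i=1..N. e (coefY N z i) * b i)"

definition PhiG :: "nat \<Rightarrow> (nat \<Rightarrow> complex) \<Rightarrow> (complex \<Rightarrow> 'a::ring_1) \<Rightarrow> (nat \<Rightarrow> 'a) \<Rightarrow> (nat \<Rightarrow> 'a) \<Rightarrow> 'a" where
  "PhiG N n e a b = (\<Sum>i=1..N. e (n i) + a i * b i)"

definition PhiT :: "nat \<Rightarrow> (nat \<Rightarrow> complex) \<Rightarrow> (complex \<Rightarrow> 'a::ring_1) \<Rightarrow> 'a" where
  "PhiT N z e = e (zprod N z)"

definition PhiTi :: "nat \<Rightarrow> (nat \<Rightarrow> complex) \<Rightarrow> (complex \<Rightarrow> 'a::ring_1) \<Rightarrow> 'a" where
  "PhiTi N z e = e (inverse (zprod N z))"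

text \<open>Generators of U_q(gl(1|1)); a module is given by the matrices of the
generators: M g f e = coefficient of basis vector f in g.e.\<close>
datatype gen = GX | GY | GG | GT | GTi

definition idm :: "'b \<Rightarrow> 'b \<Rightarrow> complex" where
  "idm f e = (if f = e then 1 else 0)"

definition mm :: "'k set \<Rightarrow> ('b \<Rightarrow> 'k \<Rightarrow> complex) \<Rightarrow> ('k \<Rightarrow> 'c \<Rightarrow> complex) \<Rightarrow> 'b \<Rightarrow> 'c \<Rightarrow> complex" where
  "mm K A B f e = (\<Sum>k\<in>K. A f k * B k e)"

definition ksign :: "bool \<Rightarrow> complex" where
  "ksign b = (if b then -1 else 1)"

text \<open>The module V_{z,n}: basis False = v (even), True = u (odd).\<close>
definition Vact :: "complex \<Rightarrow> complex \<Rightarrow> gen \<Rightarrow> bool \<Rightarrow> bool \<Rightarrow> complex" where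
  "Vact z n g f e = (case g of
      GX \<Rightarrow> (if f = True \<and> e = False then 1 else 0)
    | GY \<Rightarrow> (if f = False \<and> e = True then z^2 - inverse z ^ 2 else 0)
    | GG \<Rightarrow> (if f = e then (if e then n + 1 else n) else 0)
    | GT \<Rightarrow> (if f = e then z else 0)
    | GTi \<Rightarrow> (if f = e then inverse z else 0))"

text \<open>Tensor product of two modules via the coproduct
  Delta X = X (x) t + t^{-1} (x) X, Delta Y = Y (x) t + t^{-1} (x) Y,
  Delta t = t (x) t (hence Delta t^{-1} = t^{-1} (x) t^{-1}), Delta G = G (x) 1 + 1 (x) G,
  with the Koszul sign (A (x) B)(x (x) y) = (-1)^{|B||x|} Ax (x) By.
  p1 is the parity of basis vectors of the first factor.\<close>
definition tens2 :: "('b1 \<Rightarrow> bool) \<Rightarrow> (gen \<Rightarrow> 'b1 \<Rightarrow> 'b1 \<Rightarrow> complex) \<Rightarrow>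
    (gen \<Rightarrow> 'b2 \<Rightarrow> 'b2 \<Rightarrow> complex) \<Rightarrow> gen \<Rightarrow> 'b1 \<times> 'b2 \<Rightarrow> 'b1 \<times> 'b2 \<Rightarrow> complex" where
  "tens2 p1 M1 M2 g f e = (case (f, e) of ((f1, f2), (e1, e2)) \<Rightarrow>
     (case g of
       GX \<Rightarrow> M1 GX f1 e1 * M2 GT f2 e2 + ksign (p1 e1) * M1 GTi f1 e1 * M2 GX f2 e2
     | GY \<Rightarrow> M1 GY f1 e1 * M2 GT f2 e2 + ksign (p1 e1) * M1 GTi f1 e1 * M2 GY f2 e2
     | GG \<Rightarrow> M1 GG f1 e1 * idm f2 e2 + idm f1 e1 * M2 GG f2 e2
     | GT \<Rightarrow> M1 GT f1 e1 * M2 GT f2 e2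
     | GTi \<Rightarrow> M1 GTi f1 e1 * M2 GTi f2 e2))"

text \<open>V_{p_1} (x) (V_{p_2} (x) ( ... (x) V_{p_N})), basis = bool lists of length N
  (True at position i means the factor u in the i-th tensor factor).\<close>
fun tens_act :: "(complex \<times> complex) list \<Rightarrow> gen \<Rightarrow> bool list \<Rightarrow> bool list \<Rightarrow> complex" where
  "tens_act [] g f e = 0"
| "tens_act [p] g f e = (case (f, e) of
      ([b1], [b2]) \<Rightarrow> Vact (fst p) (snd p) g b1 b2 | _ \<Rightarrow> 0)"
| "tens_act (p # q # qs) g f e = (case (f, e) of
      (b1 # f', b2 # e') \<Rightarrow>
         tens2 (\<lambda>b. b) (Vact (fst p) (snd p)) (tens_act (q # qs)) g (b1, f') (b2, e')
    | _ \<Rightarrow> 0)"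

definition list_par :: "bool list \<Rightarrow> bool" where
  "list_par bs = odd (length (filter (\<lambda>b. b) bs))"

text \<open>Basis e_S = a_{s_1} ... a_{s_k} v for S = {s_1 < ... < s_k} subset of {1..N}.\<close>
definition wedge_m :: "nat \<Rightarrow> nat set \<Rightarrow> nat set \<Rightarrow> complex" where
  "wedge_m i F E = (if i \<notin> E \<and> F = insert i E then (-1) ^ card {s\<in>E. s < i} else 0)"

definition contr_m :: "nat \<Rightarrow> nat set \<Rightarrow> nat set \<Rightarrow> complex" where
  "contr_m i F E = (if i \<in> E \<and> F = E - {i} then (-1) ^ card {s\<in>E. s < i} else 0)"

definition UN_basis :: "nat \<Rightarrow> nat set set" where
  "UN_basis N = Pow {1..N}"

definition UN_par :: "nat set \<Rightarrow> bool" where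
  "UN_par S = odd (card S)"

definition pull_act :: "nat \<Rightarrow> (nat \<Rightarrow> complex) \<Rightarrow> (nat \<Rightarrow> complex) \<Rightarrow> gen \<Rightarrow> nat set \<Rightarrow> nat set \<Rightarrow> complex" where
  "pull_act N z n g F E = (case g of
      GX \<Rightarrow> (\<Sum>i=1..N. coefX N z i * wedge_m i F E)
    | GY \<Rightarrow> (\<Sum>i=1..N. coefY N z i * contr_m i F E)
    | GG \<Rightarrow> (\<Sum>i=1..N. n i * idm F E + mm (UN_basis N) (wedge_m i) (contr_m i) F E)
    | GT \<Rightarrow> zprod N z * idm F E
    | GTi \<Rightarrow> inverse (zprod N z) * idm F E)"

definition module_iso :: "'b1 set \<Rightarrow> ('b1 \<Rightarrow> bool) \<Rightarrow> (gen \<Rightarrow> 'b1 \<Rightarrow> 'b1 \<Rightarrow> complex) \<Rightarrow>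
    'b2 set \<Rightarrow> ('b2 \<Rightarrow> bool) \<Rightarrow> (gen \<Rightarrow> 'b2 \<Rightarrow> 'b2 \<Rightarrow> complex) \<Rightarrow> bool" where
  "module_iso C1 p1 M1 C2 p2 M2 \<longleftrightarrow>
     (\<exists>P Q. (\<forall>f\<in>C2. \<forall>e\<in>C1. P f e \<noteq> 0 \<longrightarrow> p2 f = p1 e) \<and>
       (\<forall>f\<in>C2. \<forall>e\<in>C2. mm C1 P Q f e = idm f e) \<and>
       (\<forall>f\<in>C1. \<forall>e\<in>C1. mm C2 Q P f e = idm f e) \<and>
       (\<forall>g. \<forall>f\<in>C2. \<forall>e\<in>C1. mm C1 P (M1 g) f e = mm C2 (M2 g) P f e))"

end

theory Submission
  imports Defs
begin


lemma cplx_alg_props: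
  assumes "cplx_alg e"
  shows "e 1 = 1" "e (x+y) = e x + e y" "e (x*y) = e x * e y" "e x * c = c * e x"
    "e 0 = 0" "e (-x) = - e x" "e (x - y) = e x - e y" "e (x^k) = e x ^ k"
proof -
  show h1: "e 1 = 1" "e (x+y) = e x + e y" "e (x*y) = e x * e y" "e x * c = c * e x"
    using assms unfolding cplx_alg_def by blast+
  have add: "\<And>x y. e (x+y) = e x + e y" using assms unfolding cplx_alg_def by blast
  have mul: "\<And>x y. e (x*y) = e x * e y" using assms unfolding cplx_alg_def by blast
  show z: "e 0 = 0" using add[of 0 0] by simp
  show n: "e (-x) = - e x" using add[of x "-x"] z minus_unique[of "e x" "e (-x)"] by simp
  have n': "e (-y) = - e y" using add[of y "-y"] z minus_unique[of "e y" "e (-y)"] by simp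
  show "e (x - y) = e x - e y" using add[of x "-y"] n' by simp
  show "e (x^k) = e x ^ k" by (induction k) (auto simp: h1(1) mul)
qed

lemma telescope:
  fixes z :: "nat \<Rightarrow> complex"
  assumes "\<forall>i\<in>{1..N}. z i \<noteq> 0"
  shows "(\<Sum>i=1..N. coefX N z i * coefY N z i) = zprod N z ^ 2 - inverse (zprod N z) ^ 2"
proof -
  define A where "A k = (\<Prod>j\<in>{1..<k}. inverse (z j) ^ 2) * (\<Prod>j\<in>{k..N}. z j ^ 2)" for k
  have t: "coefX N z i * coefY N z i = A i - A (Suc i)" if "i \<in> {1..N}" for i
  proof -
    have s1: "{1..<Suc i} = insert i {1..<i}" using that by auto
    have s2: "{i..N} = insert i {Suc i..N}" using that by auto
    have s3: "{i<..N} = {Suc i..N}" by auto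
    define P where "P = (\<Prod>j\<in>{1..<i}. inverse (z j))"
    define Q where "Q = (\<Prod>j\<in>{Suc i..N}. z j)"
    have "A i = P^2 * (z i ^ 2 * Q^2)" unfolding A_def P_def Q_def s2
      by (simp add: prod_power_distrib)
    moreover have "A (Suc i) = (inverse (z i) ^ 2 * P^2) * Q^2" unfolding A_def P_def Q_def s1
      by (simp add: prod_power_distrib)
    moreover have "coefX N z i * coefY N z i = (P * Q) * (P * (z i ^ 2 - inverse (z i) ^ 2) * Q)"
      unfolding coefX_def coefY_def P_def Q_def s3 by simp
    ultimately show ?thesis by (simp add: power2_eq_square algebra_simps)
  qed
  have "(\<Sum>i=1..N. coefX N z i * coefY N z i) = (\<Sum>i=1..N. A i - A (Suc i))"
    by (rule sum.cong) (simp_all add: t)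
  also have "\<dots> = - (\<Sum>i=1..N. A (Suc i) - A i)"
    by (simp add: sum_negf[symmetric])
  also have "(\<Sum>i=1..N. A (Suc i) - A i) = A (Suc N) - A 1"
    by (rule sum_Suc_diff) simp
  also have "A 1 = zprod N z ^ 2" unfolding A_def zprod_def by (simp add: prod_power_distrib)
  also have "A (Suc N) = inverse (zprod N z) ^ 2" unfolding A_def zprod_def
    using prod_inversef[of "\<lambda>j. z j ^ 2" "{1..N}", unfolded o_def]
    by (simp add: prod_power_distrib atLeastLessThanSuc_atLeastAtMost power_inverse)
  finally show ?thesis by simp
qed

lemma e_sum:
  assumes "cplx_alg e"
  shows "e (sum f A) = (\<Sum>i\<in>A. e (f i))"
proof (induction A rule: infinite_finite_induct)
  case (infinite A) then show ?case using cplx_alg_props(5)[OF assms] by simp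
next
  case empty then show ?case using cplx_alg_props(5)[OF assms] by simp
next
  case (insert x F) then show ?case using cplx_alg_props(2)[OF assms] by simp
qed

lemma e_tm:
  assumes "cplx_alg e"
  shows "(e p * u) * (e q * v) = e (p*q) * (u * v)"
proof -
  have "(e p * u) * (e q * v) = e p * ((u * e q) * v)" by (simp add: mult.assoc)
  also have "u * e q = e q * u" using cplx_alg_props(4)[OF assms] by simp
  also have "e p * ((e q * u) * v) = (e p * e q) * (u * v)" by (simp add: mult.assoc)
  finally show ?thesis using cplx_alg_props(3)[OF assms] by simp
qed

lemma XY_rel:
  assumes e: "cplx_alg e" and c: "clifford_rel N a b"
  shows "PhiX N z e a * PhiY N z e b + PhiY N z e b * PhiX N z e a
     = e (\<Sum>i=1..N. coefX N z i * coefY N z i)"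
proof -
  have "PhiX N z e a * PhiY N z e b + PhiY N z e b * PhiX N z e a
     = (\<Sum>i=1..N. \<Sum>j=1..N. e (coefX N z i * coefY N z j) * (a i * b j))
       + (\<Sum>j=1..N. \<Sum>i=1..N. e (coefX N z i * coefY N z j) * (b j * a i))"
    unfolding PhiX_def PhiY_def sum_product e_tm[OF e] by (simp add: mult.commute)
  also have "(\<Sum>j=1..N. \<Sum>i=1..N. e (coefX N z i * coefY N z j) * (b j * a i))
     = (\<Sum>i=1..N. \<Sum>j=1..N. e (coefX N z i * coefY N z j) * (b j * a i))"
    by (rule sum.swap)
  also have "(\<Sum>i=1..N. \<Sum>j=1..N. e (coefX N z i * coefY N z j) * (a i * b j))
       + (\<Sum>i=1..N. \<Sum>j=1..N. e (coefX N z i * coefY N z j) * (b j * a i))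
     = (\<Sum>i=1..N. \<Sum>j=1..N. e (coefX N z i * coefY N z j) * (a i * b j + b j * a i))"
    by (simp add: sum.distrib[symmetric] distrib_left)
  also have "\<dots> = (\<Sum>i=1..N. \<Sum>j=1..N. if i = j then e (coefX N z i * coefY N z j) else 0)"
    using c unfolding clifford_rel_def by (intro sum.cong refl) auto
  also have "\<dots> = (\<Sum>i=1..N. e (coefX N z i * coefY N z i))"
    by simp
  finally show ?thesis by (simp only: e_sum[OF e])
qed

lemma sq_zero:
  assumes e: "cplx_alg e" and ac: "\<forall>i\<in>{1..N}. \<forall>j\<in>{1..N}. a i * a j + a j * a i = 0"
  shows "(\<Sum>i=1..N. e (c i) * a i) * (\<Sum>i=1..N. e (c i) * a i) = 0"
proof -
  define S where "S = (\<Sum>i=1..N. e (c i) * a i) * (\<Sum>i=1..N. e (c i) * a i)"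
  have S1: "S = (\<Sum>i=1..N. \<Sum>j=1..N. e (c i * c j) * (a i * a j))"
    unfolding S_def sum_product e_tm[OF e] ..
  have "S = (\<Sum>j=1..N. \<Sum>i=1..N. e (c i * c j) * (a i * a j))"
    unfolding S1 by (rule sum.swap)
  also have "\<dots> = (\<Sum>i=1..N. \<Sum>j=1..N. e (c i * c j) * (a j * a i))"
    by (simp add: mult.commute)
  finally have S2: "S = (\<Sum>i=1..N. \<Sum>j=1..N. e (c i * c j) * (a j * a i))" .
  have "S + S = (\<Sum>i=1..N. \<Sum>j=1..N. e (c i * c j) * (a i * a j))
     + (\<Sum>i=1..N. \<Sum>j=1..N. e (c i * c j) * (a j * a i))"
    by (rule arg_cong2[OF S1 S2])
  also have "\<dots> = (\<Sum>i=1..N. \<Sum>j=1..N. e (c i * c j) * (a i * a j + a j * a i))"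
    by (simp add: sum.distrib[symmetric] distrib_left)
  also have "\<dots> = 0" using ac by (intro sum.neutral ballI) simp
  finally have SS: "S + S = 0" .
  have h: "e (1/2) + e (1/2) = 1"
    using cplx_alg_props(2)[OF e, of "1/2" "1/2"] cplx_alg_props(1)[OF e] by simp
  have "S = (e (1/2) + e (1/2)) * S" using h by simp
  also have "\<dots> = e (1/2) * (S + S)" by (simp add: distrib_left distrib_right)
  finally show ?thesis using SS unfolding S_def by simp
qed

lemma comm_term:
  fixes u v p q :: "'a::ring_1"
  assumes "u * (v * q) = (v * q) * u" "p * (v * q) = v * (p * q)"
  shows "(u + p) * (v * q) - (v * q) * (u + p) = v * (p * q - q * p)"
  using assms by (simp add: algebra_simps)

lemma comm_gen:
  fixes N :: nat
  assumes e: "cplx_alg e"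
    and pq: "\<forall>i\<in>{1..N}. \<forall>k\<in>{1..N}. p i * q k - q k * p i = (if i = k then r i else 0)"
  shows "(\<Sum>i=1..N. e (n i) + p i) * (\<Sum>k=1..N. e (c k) * q k)
       - (\<Sum>k=1..N. e (c k) * q k) * (\<Sum>i=1..N. e (n i) + p i)
       = (\<Sum>i=1..N. e (c i) * r i)"
proof -
  have "(\<Sum>i=1..N. e (n i) + p i) * (\<Sum>k=1..N. e (c k) * q k)
       - (\<Sum>k=1..N. e (c k) * q k) * (\<Sum>i=1..N. e (n i) + p i)
     = (\<Sum>i=1..N. \<Sum>k=1..N. (e (n i) + p i) * (e (c k) * q k))
       - (\<Sum>k=1..N. \<Sum>i=1..N. (e (c k) * q k) * (e (n i) + p i))"
    unfolding sum_product ..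
  also have "(\<Sum>k=1..N. \<Sum>i=1..N. (e (c k) * q k) * (e (n i) + p i))
     = (\<Sum>i=1..N. \<Sum>k=1..N. (e (c k) * q k) * (e (n i) + p i))"
    by (rule sum.swap)
  also have "(\<Sum>i=1..N. \<Sum>k=1..N. (e (n i) + p i) * (e (c k) * q k))
       - (\<Sum>i=1..N. \<Sum>k=1..N. (e (c k) * q k) * (e (n i) + p i))
     = (\<Sum>i=1..N. \<Sum>k=1..N. (e (n i) + p i) * (e (c k) * q k) - (e (c k) * q k) * (e (n i) + p i))"
    by (simp add: sum_subtractf)
  also have "\<dots> = (\<Sum>i=1..N. \<Sum>k=1..N. e (c k) * (p i * q k - q k * p i))"
  proof (intro sum.cong refl comm_term)
    fix i k
    show "e (n i) * (e (c k) * q k) = e (c k) * q k * e (n i)"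
      using cplx_alg_props(4)[OF e] by metis
    have "p i * e (c k) = e (c k) * p i" using cplx_alg_props(4)[OF e] by metis
    then show "p i * (e (c k) * q k) = e (c k) * (p i * q k)"
      by (metis mult.assoc)
  qed
  also have "\<dots> = (\<Sum>i=1..N. \<Sum>k=1..N. if i = k then e (c k) * r i else 0)"
    using pq by (intro sum.cong refl) auto
  also have "\<dots> = (\<Sum>i=1..N. e (c i) * r i)" by (intro sum.cong refl) (subst sum.delta', auto)
  finally show ?thesis .
qed

lemma cliff_X:
  assumes c: "clifford_rel N a b" and i: "i \<in> {1..N}" and k: "k \<in> {1..N}"
  shows "a i * b i * a k - a k * (a i * b i) = (if i = k then a i else 0)"
proof -
  have H1: "a k * b i + b i * a k = (if k = i then 1 else 0)"
    using c i k unfolding clifford_rel_def by blast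
  have h1: "b i * a k = (if k = i then 1 else 0) - a k * b i"
    using H1 by (metis add_diff_cancel_left')
  have H2: "a k * a i + a i * a k = 0"
    using c i k unfolding clifford_rel_def by blast
  have h2: "a i * a k = - (a k * a i)"
    using minus_unique[OF H2] by simp
  have "a i * b i * a k = a i * (b i * a k)" by (simp add: mult.assoc)
  also have "\<dots> = (if k = i then a i else 0) - (a i * a k) * b i"
    unfolding h1 by (simp add: right_diff_distrib mult.assoc)
  also have "\<dots> = (if k = i then a i else 0) + a k * (a i * b i)"
    unfolding h2 by (simp add: mult.assoc)
  finally show ?thesis by auto
qed

lemma cliff_Y:
  assumes c: "clifford_rel N a b" and i: "i \<in> {1..N}" and k: "k \<in> {1..N}"
  shows "a i * b i * b k - b k * (a i * b i) = (if i = k then - b i else 0)"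
proof -
  have H1: "a i * b k + b k * a i = (if i = k then 1 else 0)"
    using c i k unfolding clifford_rel_def by blast
  have h1: "b k * a i = (if i = k then 1 else 0) - a i * b k"
    using H1 by (metis add_diff_cancel_left')
  have H2: "b i * b k + b k * b i = 0"
    using c i k unfolding clifford_rel_def by blast
  have h2: "b k * b i = - (b i * b k)"
    using minus_unique[OF H2] by simp
  have "b k * (a i * b i) = (b k * a i) * b i" by (simp add: mult.assoc)
  also have "\<dots> = (if i = k then b i else 0) - a i * (b k * b i)"
    unfolding h1 by (simp add: left_diff_distrib mult.assoc)
  also have "\<dots> = (if i = k then b i else 0) + a i * b i * b k"
    unfolding h2 by (simp add: mult.assoc)
  finally show ?thesis by auto
qed

lemma uq_part:
  assumes e: "cplx_alg e" and c: "clifford_rel N a b" and z: "\<forall>i\<in>{1..N}. z i \<noteq> 0"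
  shows "uq_rel (PhiX N z e a) (PhiY N z e b) (PhiG N n e a b) (PhiT N z e) (PhiTi N z e)"
proof -
  have zp: "zprod N z \<noteq> 0" unfolding zprod_def using z by simp
  have TTi: "PhiT N z e * PhiTi N z e = 1" "PhiTi N z e * PhiT N z e = 1"
    unfolding PhiT_def PhiTi_def using zp
    by (simp_all add: cplx_alg_props(3)[OF e, symmetric] cplx_alg_props(1)[OF e])
  have XY: "PhiX N z e a * PhiY N z e b + PhiY N z e b * PhiX N z e a
     = PhiT N z e ^ 2 - PhiTi N z e ^ 2"
    unfolding XY_rel[OF e c] telescope[OF z] PhiT_def PhiTi_def
    by (simp add: cplx_alg_props(7,8)[OF e])
  have XX: "PhiX N z e a * PhiX N z e a = 0"
    unfolding PhiX_def by (rule sq_zero[OF e]) (use c in \<open>simp add: clifford_rel_def\<close>)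
  have YY: "PhiY N z e b * PhiY N z e b = 0"
    unfolding PhiY_def by (rule sq_zero[OF e]) (use c in \<open>simp add: clifford_rel_def\<close>)
  have GX: "PhiG N n e a b * PhiX N z e a - PhiX N z e a * PhiG N n e a b = PhiX N z e a"
    unfolding PhiG_def PhiX_def
    by (rule comm_gen[OF e]) (use cliff_X[OF c] in blast)
  have GY0: "PhiG N n e a b * PhiY N z e b - PhiY N z e b * PhiG N n e a b
      = (\<Sum>i=1..N. e (coefY N z i) * (- b i))"
    unfolding PhiG_def PhiY_def
    by (rule comm_gen[OF e]) (use cliff_Y[OF c] in blast)
  have GY: "PhiG N n e a b * PhiY N z e b - PhiY N z e b * PhiG N n e a b = - PhiY N z e b"
    using GY0 unfolding PhiY_def by (simp add: sum_negf)
  have cen: "\<And>x y. e x * y = y * e x" using cplx_alg_props(4)[OF e] by metis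
  show ?thesis unfolding uq_rel_def
    using TTi XY XX YY GX GY cen unfolding PhiT_def by metis
qed



definition Sb :: "bool \<Rightarrow> nat set \<Rightarrow> nat set" where
  "Sb c E = (if c then insert 1 (Suc ` E) else Suc ` E)"

lemma zero_notin_Sb[simp]: "0 \<notin> Sb c E"
  unfolding Sb_def by auto

lemma Sb_eq: "0 \<notin> F \<Longrightarrow> 0 \<notin> G \<Longrightarrow> (Sb b F = Sb c G) \<longleftrightarrow> (b = c \<and> F = G)"
proof -
  assume F: "0 \<notin> F" and G: "0 \<notin> G"
  have k: "(Suc ` F = Suc ` G) \<longleftrightarrow> F = G" by (simp add: inj_image_eq_iff)
  have "1 \<notin> Suc ` F" "1 \<notin> Suc ` G" using F G by auto
  then show ?thesis unfolding Sb_def using k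
    by (cases b; cases c) (simp_all add: insert_ident, blast, blast)
qed

lemma one_in_Sb: "0 \<notin> E \<Longrightarrow> (1 \<in> Sb c E) \<longleftrightarrow> c"
  unfolding Sb_def by auto

lemma Suc_in_Sb: "1 \<le> j \<Longrightarrow> (Suc j \<in> Sb c E) \<longleftrightarrow> j \<in> E"
  unfolding Sb_def by auto

lemma insert_Sb: "1 \<le> j \<Longrightarrow> insert (Suc j) (Sb c E) = Sb c (insert j E)"
  unfolding Sb_def by auto

lemma remove_Sb: "1 \<le> j \<Longrightarrow> Sb c E - {Suc j} = Sb c (E - {j})"
  unfolding Sb_def by auto

lemma remove1_Sb: "0 \<notin> E \<Longrightarrow> Sb c E - {1} = Sb False E"
  unfolding Sb_def by auto

lemma insert1_Sb: "insert 1 (Sb c E) = Sb True E"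
  unfolding Sb_def by auto

lemma Sb_less: "1 \<le> j \<Longrightarrow> {s\<in>Sb c E. s < Suc j} = Sb c {s\<in>E. s < j}"
  unfolding Sb_def by auto

lemma less1_Sb: "{s\<in>Sb c E. s < 1} = {}"
  unfolding Sb_def by auto

lemma card_Sb: "finite X \<Longrightarrow> 0 \<notin> X \<Longrightarrow> card (Sb c X) = (if c then 1 else 0) + card X"
proof -
  assume X: "finite X" "0 \<notin> X"
  have "1 \<notin> Suc ` X" using X by auto
  moreover have "card (Suc ` X) = card X" by (simp add: card_image)
  ultimately show ?thesis unfolding Sb_def using X by (simp add: card_insert_disjoint)
qed

lemma sign_Sb: "0 \<notin> E \<Longrightarrow> 1 \<le> j \<Longrightarrow>
   ((-1::complex) ^ card {s\<in>Sb c E. s < Suc j}) = ksign c * (-1) ^ card {s\<in>E. s < j}"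
  by (subst Sb_less, simp, subst card_Sb) (auto simp: ksign_def power_add)

lemma wedge_1: "0 \<notin> F \<Longrightarrow> 0 \<notin> E \<Longrightarrow>
   wedge_m 1 (Sb b F) (Sb c E) = (if b \<and> \<not> c \<and> F = E then 1 else 0)"
proof (cases c)
  case True
  assume "0 \<notin> F" "0 \<notin> E"
  then show ?thesis using True one_in_Sb[of E c] by (simp add: wedge_m_def)
next
  case False
  assume F: "0 \<notin> F" and E: "0 \<notin> E"
  have "1 \<notin> Sb c E" using False one_in_Sb[OF E, of c] by simp
  moreover have "insert 1 (Sb c E) = Sb True E" by (rule insert1_Sb)
  ultimately show ?thesis unfolding wedge_m_def less1_Sb using Sb_eq[OF F E, of b True] False by simp
qed

lemma wedge_Suc: "0 \<notin> F \<Longrightarrow> 0 \<notin> E \<Longrightarrow> 1 \<le> j \<Longrightarrow>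
   wedge_m (Suc j) (Sb b F) (Sb c E) = (if b = c then ksign c * wedge_m j F E else 0)"
proof -
  assume F: "0 \<notin> F" and E: "0 \<notin> E" and j: "1 \<le> j"
  have E': "0 \<notin> insert j E" using E j by auto
  show ?thesis
    unfolding wedge_m_def Suc_in_Sb[OF j] insert_Sb[OF j] Sb_eq[OF F E'] sign_Sb[OF E j]
    by simp
qed

lemma contr_1: "0 \<notin> F \<Longrightarrow> 0 \<notin> E \<Longrightarrow>
   contr_m 1 (Sb b F) (Sb c E) = (if c \<and> \<not> b \<and> F = E then 1 else 0)"
proof (cases c)
  case False
  assume "0 \<notin> F" "0 \<notin> E"
  then show ?thesis using False one_in_Sb[of E c] by (simp add: contr_m_def)
next
  case True
  assume F: "0 \<notin> F" and E: "0 \<notin> E"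
  have "1 \<in> Sb c E" using True one_in_Sb[OF E, of c] by simp
  moreover have "Sb c E - {1} = Sb False E" by (rule remove1_Sb[OF E])
  ultimately show ?thesis unfolding contr_m_def less1_Sb using Sb_eq[OF F E, of b False] True by simp
qed

lemma contr_Suc: "0 \<notin> F \<Longrightarrow> 0 \<notin> E \<Longrightarrow> 1 \<le> j \<Longrightarrow>
   contr_m (Suc j) (Sb b F) (Sb c E) = (if b = c then ksign c * contr_m j F E else 0)"
proof -
  assume F: "0 \<notin> F" and E: "0 \<notin> E" and j: "1 \<le> j"
  have E': "0 \<notin> E - {j}" using E j by auto
  show ?thesis
    unfolding contr_m_def Suc_in_Sb[OF j] remove_Sb[OF j] Sb_eq[OF F E'] sign_Sb[OF E j]
    by simp
qed

lemma idm_Sb: "0 \<notin> F \<Longrightarrow> 0 \<notin> E \<Longrightarrow> idm (Sb b F) (Sb c E) = idm b c * idm F E"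
  unfolding idm_def by (simp add: Sb_eq)



lemma sum_split1: "(\<Sum>i=1..Suc N. h i) = h 1 + (\<Sum>j=1..N. h (Suc j))"
  by (simp add: sum.atLeast_Suc_atMost sum.shift_bounds_cl_Suc_ivl del: sum.cl_ivl_Suc)

lemma prod_split1: "(\<Prod>i=1..Suc N. h i) = h 1 * (\<Prod>j=1..N. h (Suc j))"
  by (simp add: prod.atLeast_Suc_atMost prod.shift_bounds_cl_Suc_ivl del: prod.cl_ivl_Suc)

lemma prod_gt_shift: "(\<Prod>i\<in>{Suc j<..Suc N}. h i) = (\<Prod>i\<in>{j<..N}. h (Suc i))"
  by (rule prod.reindex_bij_witness[where i="Suc" and j="\<lambda>i. i - 1"]) auto

lemma prod_lt_shift: "1 \<le> j \<Longrightarrow> (\<Prod>i\<in>{1..<Suc j}. h i) = h 1 * (\<Prod>i\<in>{1..<j}. h (Suc i))"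
proof -
  assume j: "1 \<le> j"
  have "(\<Prod>i\<in>{1..<Suc j}. h i) = h 1 * (\<Prod>i\<in>{Suc 1..<Suc j}. h i)"
    using j by (simp add: prod.atLeast_Suc_lessThan del: prod.op_ivl_Suc)
  also have "(\<Prod>i\<in>{Suc 1..<Suc j}. h i) = (\<Prod>i\<in>{1..<j}. h (Suc i))"
    by (rule prod.reindex_bij_witness[where i="Suc" and j="\<lambda>i. i - 1"]) auto
  finally show ?thesis .
qed

lemma zprod_Suc: "zprod (Suc N) z = z 1 * zprod N (\<lambda>i. z (Suc i))"
  unfolding zprod_def by (rule prod_split1)

lemma gt0_eq: "{0::nat<..N} = {1..N}" by auto

lemma coefX_1: "coefX (Suc N) z 1 = zprod N (\<lambda>i. z (Suc i))"
  unfolding coefX_def zprod_def using prod_gt_shift[of z 0 N] unfolding gt0_eq One_nat_def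
  by simp

lemma coefY_1: "coefY (Suc N) z 1 = (z 1 ^ 2 - inverse (z 1) ^ 2) * zprod N (\<lambda>i. z (Suc i))"
  unfolding coefY_def zprod_def using prod_gt_shift[of z 0 N] unfolding gt0_eq One_nat_def
  by simp

lemma coefX_Suc: "1 \<le> j \<Longrightarrow> coefX (Suc N) z (Suc j) = inverse (z 1) * coefX N (\<lambda>i. z (Suc i)) j"
  unfolding coefX_def by (simp only: prod_lt_shift prod_gt_shift mult.assoc)

lemma coefY_Suc: "1 \<le> j \<Longrightarrow> coefY (Suc N) z (Suc j) = inverse (z 1) * coefY N (\<lambda>i. z (Suc i)) j"
  unfolding coefY_def by (simp only: prod_lt_shift prod_gt_shift mult.assoc)



lemma sign_sq: "((-1::complex) ^ c) * (-1) ^ c = 1"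
  by (simp add: power_mult_distrib[symmetric])

lemma mm_wc:
  assumes E: "E \<subseteq> {1..N}" and i: "i \<in> {1..N}"
  shows "mm (UN_basis N) (wedge_m i) (contr_m i) F E = idm F E * (if i \<in> E then 1 else 0)"
proof -
  have "mm (UN_basis N) (wedge_m i) (contr_m i) F E
      = (\<Sum>K\<in>Pow {1..N}. if K = E - {i} then wedge_m i F K * contr_m i K E else 0)"
    unfolding mm_def UN_basis_def by (intro sum.cong refl) (auto simp: contr_m_def)
  also have "\<dots> = wedge_m i F (E - {i}) * contr_m i (E - {i}) E"
    using E by (subst sum.delta) auto
  also have "\<dots> = idm F E * (if i \<in> E then 1 else 0)"
  proof (cases "i \<in> E")
    case True
    have "{s \<in> E - {i}. s < i} = {s \<in> E. s < i}" by auto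
    moreover have "insert i (E - {i}) = E" using True by auto
    ultimately show ?thesis using True unfolding wedge_m_def contr_m_def idm_def
      by (simp add: sign_sq)
  next
    case False
    then show ?thesis unfolding contr_m_def by simp
  qed
  finally show ?thesis .
qed

definition pullG :: "nat \<Rightarrow> (nat \<Rightarrow> complex) \<Rightarrow> nat set \<Rightarrow> nat set \<Rightarrow> complex" where
  "pullG N n F E = idm F E * (\<Sum>i=1..N. n i + (if i \<in> E then 1 else 0))"

lemma pull_GG:
  assumes E: "E \<subseteq> {1..N}"
  shows "pull_act N z n GG F E = pullG N n F E"
proof -
  have "pull_act N z n GG F E = (\<Sum>i=1..N. idm F E * (n i + (if i \<in> E then 1 else 0)))"
    unfolding pull_act_def using mm_wc[OF E]
    by (simp add: algebra_simps)
  then show ?thesis unfolding pullG_def by (simp add: sum_distrib_left)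
qed

lemma Sb_sub: "E \<subseteq> {1..N} \<Longrightarrow> Sb c E \<subseteq> {1..Suc N}"
  unfolding Sb_def by auto

lemma step:
  assumes F: "F \<subseteq> {1..N}" and E: "E \<subseteq> {1..N}"
  shows "pull_act (Suc N) z n g (Sb b F) (Sb c E)
       = tens2 (\<lambda>b. b) (Vact (z 1) (n 1)) (pull_act N (\<lambda>i. z (Suc i)) (\<lambda>i. n (Suc i))) g (b, F) (c, E)"
proof -
  define z' where "z' = (\<lambda>i. z (Suc i))"
  define n' where "n' = (\<lambda>i. n (Suc i))"
  have F0: "0 \<notin> F" and E0: "0 \<notin> E" using F E by auto
  have SX: "(\<Sum>j=1..N. coefX (Suc N) z (Suc j) * wedge_m (Suc j) (Sb b F) (Sb c E))
     = (if b = c then ksign c * inverse (z 1) else 0) * (\<Sum>j=1..N. coefX N z' j * wedge_m j F E)"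
    unfolding sum_distrib_left z'_def
    by (intro sum.cong refl) (simp add: coefX_Suc wedge_Suc F0 E0)
  have SY: "(\<Sum>j=1..N. coefY (Suc N) z (Suc j) * contr_m (Suc j) (Sb b F) (Sb c E))
     = (if b = c then ksign c * inverse (z 1) else 0) * (\<Sum>j=1..N. coefY N z' j * contr_m j F E)"
    unfolding sum_distrib_left z'_def
    by (intro sum.cong refl) (simp add: coefY_Suc contr_Suc F0 E0)
  have SG: "(\<Sum>j=1..N. n (Suc j) + (if Suc j \<in> Sb c E then 1 else 0))
      = (\<Sum>j=1..N. n' j + (if j \<in> E then 1 else 0))"
    unfolding n'_def by (intro sum.cong refl) (simp add: Suc_in_Sb)
  show ?thesis
  proof (cases g)
    case GX
    show ?thesis unfolding GX pull_act_def tens2_def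
      apply (simp only: gen.case prod.case sum_split1 SX coefX_1 wedge_1[OF F0 E0])
      apply (cases b; cases c; simp add: F0 E0 Vact_def idm_def ksign_def z'_def)
      done
  next
    case GY
    show ?thesis unfolding GY pull_act_def tens2_def
      apply (simp only: gen.case prod.case sum_split1 SY coefY_1 contr_1[OF F0 E0])
      apply (cases b; cases c; simp add: F0 E0 Vact_def idm_def ksign_def z'_def)
      done
  next
    case GG
    have L: "pull_act (Suc N) z n GG (Sb b F) (Sb c E)
       = idm b c * idm F E * (n 1 + (if c then 1 else 0) + (\<Sum>j=1..N. n' j + (if j \<in> E then 1 else 0)))"
      unfolding pull_GG[OF Sb_sub[OF E]] pullG_def sum_split1 SG idm_Sb[OF F0 E0] one_in_Sb[OF E0]
      by (simp add: algebra_simps)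
    have R: "pull_act N z' n' GG F E = idm F E * (\<Sum>j=1..N. n' j + (if j \<in> E then 1 else 0))"
      unfolding pull_GG[OF E] pullG_def ..
    show ?thesis unfolding GG L tens2_def
      using R[unfolded z'_def n'_def]
      by (cases b; cases c; simp add: Vact_def idm_def n'_def algebra_simps)
  next
    case GT
    show ?thesis unfolding GT tens2_def pull_act_def
      by (simp add: zprod_Suc idm_Sb F0 E0 Vact_def) (simp add: idm_def)
  next
    case GTi
    show ?thesis unfolding GTi tens2_def pull_act_def
      by (simp add: zprod_Suc idm_Sb F0 E0 Vact_def) (simp add: idm_def)
  qed
qed



definition setOf :: "bool list \<Rightarrow> nat set" where
  "setOf bs = {i. 0 < i \<and> i \<le> length bs \<and> bs ! (i - 1)}"

lemma setOf_Nil[simp]: "setOf [] = {}"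
  unfolding setOf_def by auto

lemma setOf_sub: "setOf f \<subseteq> {1..length f}"
  unfolding setOf_def by auto

lemma setOf_Cons: "setOf (b # f) = Sb b (setOf f)"
proof (rule set_eqI)
  fix x
  show "x \<in> setOf (b # f) \<longleftrightarrow> x \<in> Sb b (setOf f)"
  proof (cases x)
    case 0 then show ?thesis by (simp add: setOf_def)
  next
    case (Suc k)
    show ?thesis
    proof (cases k)
      case 0 then show ?thesis using Suc by (auto simp: setOf_def Sb_def)
    next
      case (Suc m)
      then show ?thesis using \<open>x = Suc k\<close> by (auto simp: setOf_def Sb_def)
    qed
  qed
qed

lemma setOf_nth: "i < length f \<Longrightarrow> (Suc i \<in> setOf f) \<longleftrightarrow> f ! i"
  unfolding setOf_def by auto

lemma setOf_inj: "length f = length g \<Longrightarrow> setOf f = setOf g \<Longrightarrow> f = g"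
  by (rule nth_equalityI) (auto simp: setOf_nth[symmetric])

lemma idm_setOf: "length f = length g \<Longrightarrow> idm f g = idm (setOf f) (setOf g)"
  unfolding idm_def using setOf_inj by auto

definition listOf :: "nat \<Rightarrow> nat set \<Rightarrow> bool list" where
  "listOf N E = map (\<lambda>i. Suc i \<in> E) [0..<N]"

lemma length_listOf[simp]: "length (listOf N E) = N"
  unfolding listOf_def by simp

lemma setOf_listOf: "E \<subseteq> {1..N} \<Longrightarrow> setOf (listOf N E) = E"
proof (rule set_eqI)
  assume E: "E \<subseteq> {1..N}"
  fix x
  show "x \<in> setOf (listOf N E) \<longleftrightarrow> x \<in> E"
  proof (cases x)
    case 0 then show ?thesis using E by (auto simp: setOf_def)
  next
    case (Suc k)
    then show ?thesis using E by (auto simp: setOf_def listOf_def)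
  qed
qed

lemma card_setOf: "card (setOf f) = length (filter (\<lambda>b. b) f)"
proof (induction f)
  case Nil then show ?case by simp
next
  case (Cons b f)
  have "finite (setOf f)" using setOf_sub[of f] finite_subset by blast
  moreover have "0 \<notin> setOf f" using setOf_sub[of f] by auto
  ultimately show ?case unfolding setOf_Cons using Cons by (simp add: card_Sb)
qed

lemma tens2_transfer:
  assumes "\<And>g. M2 g x y = M2' g X Y" and "idm x y = idm X Y"
  shows "tens2 p1 M1 M2 g (b, x) (c, y) = tens2 p1 M1 M2' g (b, X) (c, Y)"
  unfolding tens2_def using assms by (cases g) simp_all

lemma upt_shift: "map h [1..<Suc N + 1] = h 1 # map (\<lambda>i. h (Suc i)) [1..<N + 1]"
proof -
  have "[1..<Suc N + 1] = 1 # [Suc 1..<Suc N + 1]" by (simp add: upt_conv_Cons)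
  also have "[Suc 1..<Suc N + 1] = map Suc [1..<N+1]" by (simp add: map_Suc_upt)
  finally show ?thesis by simp
qed

lemma base_eq: "tens2 (\<lambda>b. b) (Vact x y) (pull_act 0 z n) g (b, {}) (c, {}) = Vact x y g b c"
proof -
  have G: "pull_act 0 z n GG {} {} = 0" using pull_GG[of "{}" 0 z n "{}"] by (simp add: pullG_def)
  show ?thesis unfolding tens2_def using G
    by (cases g) (simp_all add: pull_act_def zprod_def idm_def)
qed

lemma tens_pull:
  "1 \<le> N \<Longrightarrow> length f = N \<Longrightarrow> length e = N \<Longrightarrow>
   tens_act (map (\<lambda>i. (z i, n i)) [1..<N+1]) g f e = pull_act N z n g (setOf f) (setOf e)"
proof (induction N arbitrary: z n f e g)
  case 0 then show ?case by simp
next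
  case (Suc N)
  obtain b f' where f: "f = b # f'" and lf: "length f' = N" using Suc.prems by (cases f) auto
  obtain c e' where e: "e = c # e'" and le: "length e' = N" using Suc.prems by (cases e) auto
  have subF: "setOf f' \<subseteq> {1..N}" and subE: "setOf e' \<subseteq> {1..N}"
    using setOf_sub[of f'] setOf_sub[of e'] lf le by simp_all
  have RHS: "pull_act (Suc N) z n g (setOf f) (setOf e)
      = tens2 (\<lambda>b. b) (Vact (z 1) (n 1)) (pull_act N (\<lambda>i. z (Suc i)) (\<lambda>i. n (Suc i))) g
          (b, setOf f') (c, setOf e')"
    unfolding f e setOf_Cons by (rule step[OF subF subE])
  show ?case
  proof (cases N)
    case 0
    then have "f' = []" "e' = []" using lf le by auto
    then show ?thesis unfolding RHS using 0 f e by (simp add: base_eq)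
  next
    case (Suc M)
    obtain q qs where qq: "map (\<lambda>i. (z (Suc i), n (Suc i))) [1..<N + 1] = q # qs"
      using Suc by (cases "map (\<lambda>i. (z (Suc i), n (Suc i))) [1..<N + 1]") auto
    have IH: "\<And>g. tens_act (q # qs) g f' e' = pull_act N (\<lambda>i. z (Suc i)) (\<lambda>i. n (Suc i)) g (setOf f') (setOf e')"
      using Suc.IH[of f' e' "\<lambda>i. z (Suc i)" "\<lambda>i. n (Suc i)"] lf le Suc qq by simp
    have "tens_act (map (\<lambda>i. (z i, n i)) [1..<Suc N + 1]) g f e
        = tens2 (\<lambda>b. b) (Vact (z 1) (n 1)) (tens_act (q # qs)) g (b, f') (c, e')"
      unfolding upt_shift qq f e by simp
    also have "\<dots> = tens2 (\<lambda>b. b) (Vact (z 1) (n 1)) (pull_act N (\<lambda>i. z (Suc i)) (\<lambda>i. n (Suc i))) g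
          (b, setOf f') (c, setOf e')"
      by (rule tens2_transfer[where M2'="pull_act N (\<lambda>i. z (Suc i)) (\<lambda>i. n (Suc i))"])
        (use IH idm_setOf[of f' e'] lf le in simp_all)
    finally show ?thesis unfolding RHS .
  qed
qed



lemma finite_C2: "finite {bs :: bool list. length bs = N}"
  using finite_lists_length_eq[of "UNIV::bool set" N] by simp

lemma iso_part:
  assumes N: "1 \<le> N"
  shows "module_iso (UN_basis N) UN_par (pull_act N z n)
           {bs::bool list. length bs = N} list_par (tens_act (map (\<lambda>i. (z i, n i)) [1..<N+1]))"
proof -
  define P where "P f E = idm (setOf f) E" for f :: "bool list" and E :: "nat set"
  define Q where "Q E f = idm E (setOf f)" for f :: "bool list" and E :: "nat set"
  have inC1: "setOf f \<in> UN_basis N" if "length f = N" for f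
    using setOf_sub[of f] that unfolding UN_basis_def by auto
  have uniq: "setOf f = F \<longleftrightarrow> f = listOf N F" if "length f = N" "F \<in> UN_basis N" for f F
    using that setOf_listOf[of F N] setOf_inj[of f "listOf N F"] unfolding UN_basis_def by auto
  have c1: "\<forall>f\<in>{bs::bool list. length bs = N}. \<forall>E\<in>UN_basis N. P f E \<noteq> 0 \<longrightarrow> list_par f = UN_par E"
    unfolding P_def idm_def list_par_def UN_par_def by (auto simp: card_setOf)
  have c2: "\<forall>f\<in>{bs::bool list. length bs = N}. \<forall>e\<in>{bs::bool list. length bs = N}. mm (UN_basis N) P Q f e = idm f e"
  proof (intro ballI)
    fix f e assume f: "f \<in> {bs::bool list. length bs = N}" and e: "e \<in> {bs::bool list. length bs = N}"
    have "mm (UN_basis N) P Q f e = (\<Sum>K\<in>UN_basis N. if setOf f = K then idm K (setOf e) else 0)"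
      unfolding mm_def P_def Q_def by (intro sum.cong refl) (simp add: idm_def)
    also have "\<dots> = idm (setOf f) (setOf e)"
      using inC1[of f] f by (simp add: UN_basis_def)
    also have "\<dots> = idm f e" using f e idm_setOf[of f e] by simp
    finally show "mm (UN_basis N) P Q f e = idm f e" .
  qed
  have c3: "\<forall>F\<in>UN_basis N. \<forall>E\<in>UN_basis N. mm {bs::bool list. length bs = N} Q P F E = idm F E"
  proof (intro ballI)
    fix F E assume F: "F \<in> UN_basis N" and E: "E \<in> UN_basis N"
    have "mm {bs::bool list. length bs = N} Q P F E
       = (\<Sum>f\<in>{bs::bool list. length bs = N}. if listOf N F = f then idm F E else 0)"
      unfolding mm_def P_def Q_def
    proof (intro sum.cong refl)
      fix f :: "bool list" assume "f \<in> {bs::bool list. length bs = N}"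
      then have u: "setOf f = F \<longleftrightarrow> f = listOf N F" using uniq[OF _ F] by simp
      show "idm F (setOf f) * idm (setOf f) E = (if listOf N F = f then idm F E else 0)"
        using u unfolding idm_def by auto
    qed
    also have "\<dots> = idm F E" using finite_C2[of N] by simp
    finally show "mm {bs::bool list. length bs = N} Q P F E = idm F E" .
  qed
  have c4: "\<forall>g. \<forall>f\<in>{bs::bool list. length bs = N}. \<forall>E\<in>UN_basis N.
      mm (UN_basis N) P (pull_act N z n g) f E
    = mm {bs::bool list. length bs = N} (tens_act (map (\<lambda>i. (z i, n i)) [1..<N+1]) g) P f E"
  proof (intro allI ballI)
    fix g f E assume f: "f \<in> {bs::bool list. length bs = N}" and E: "E \<in> UN_basis N"
    have "mm (UN_basis N) P (pull_act N z n g) f E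
       = (\<Sum>K\<in>UN_basis N. if setOf f = K then pull_act N z n g K E else 0)"
      unfolding mm_def P_def by (intro sum.cong refl) (simp add: idm_def)
    also have "\<dots> = pull_act N z n g (setOf f) E"
      using inC1[of f] f by (simp add: UN_basis_def)
    finally have L: "mm (UN_basis N) P (pull_act N z n g) f E = pull_act N z n g (setOf f) E" .
    have "mm {bs::bool list. length bs = N} (tens_act (map (\<lambda>i. (z i, n i)) [1..<N+1]) g) P f E
       = (\<Sum>h\<in>{bs::bool list. length bs = N}. if listOf N E = h then tens_act (map (\<lambda>i. (z i, n i)) [1..<N+1]) g f h else 0)"
      unfolding mm_def P_def using uniq[OF _ E]
      by (intro sum.cong refl) (auto simp: idm_def)
    also have "\<dots> = tens_act (map (\<lambda>i. (z i, n i)) [1..<N+1]) g f (listOf N E)"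
      using finite_C2[of N] by simp
    also have "\<dots> = pull_act N z n g (setOf f) (setOf (listOf N E))"
      using tens_pull[OF N] f by simp
    also have "setOf (listOf N E) = E" using E setOf_listOf unfolding UN_basis_def by auto
    finally show "mm (UN_basis N) P (pull_act N z n g) f E
      = mm {bs::bool list. length bs = N} (tens_act (map (\<lambda>i. (z i, n i)) [1..<N+1]) g) P f E"
      using L by simp
  qed
  show ?thesis unfolding module_iso_def using c1 c2 c3 c4 by blast
qed

theorem mainTheorem1:
  fixes N :: nat and z n :: "nat \<Rightarrow> complex"
  assumes "N \<ge> 1" and "\<forall>i\<in>{1..N}. z i \<noteq> 0"
  shows "(\<forall>(e :: complex \<Rightarrow> 'a::ring_1) (a :: nat \<Rightarrow> 'a) b.
            cplx_alg e \<and> clifford_rel N a b \<longrightarrow>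
            uq_rel (PhiX N z e a) (PhiY N z e b) (PhiG N n e a b) (PhiT N z e) (PhiTi N z e))
       \<and> module_iso (UN_basis N) UN_par (pull_act N z n)
           {bs. length bs = N} list_par (tens_act (map (\<lambda>i. (z i, n i)) [1..<N+1]))"
  using uq_part[OF _ _ assms(2)] iso_part[OF assms(1)] by blast

end
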